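(* For $m\ge1$, $\beta\in\mathbb{R}$ and $x\in(0,1)$ let $$\mathcal{F}_m(x,\beta)=e^{m\pi ix}e^{-2\pi i\beta x}\frac{\sin^m\pi x}{\pi^{m-1}}\frac{d^{m-1}}{dx^{m-1}}\Big((i-\cot\pi x)e^{2\pi i\beta x}\Big).$$ Then $\mathcal{F}_m(x,\beta)=F_m(e^{i\pi x},\beta)$, where $F_m(u,\beta)$ are the polynomials in $u$ defined by $F_1(u,\beta)=-1$ and, for $m\ge2$, $$F_m(u,\beta)=\big(\beta(u^2-1)-(m-1)u^2\big)F_{m-1}(u,\beta)+\frac{u(u^2-1)}{2}\frac{\partial}{\partial u}F_{m-1}(u,\beta).$$ *)

theory Defs
  imports "HOL-Analysis.Analysis" "HOL-Computational_Algebra.Polynomial"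
begin

definition vderiv_iter :: "nat \<Rightarrow> (real \<Rightarrow> complex) \<Rightarrow> real \<Rightarrow> complex" where
  "vderiv_iter k f = ((\<lambda>g. \<lambda>t. vector_derivative g (at t)) ^^ k) f"

text \<open>The polynomials F_m(u, beta) in u; Fpoly m beta is F_m for m >= 1
  (the value at m = 0 is an unused dummy).\<close>
fun Fpoly :: "nat \<Rightarrow> real \<Rightarrow> complex poly" where
  "Fpoly 0 \<beta> = 0"
| "Fpoly (Suc 0) \<beta> = [:-1:]"
| "Fpoly (Suc (Suc n)) \<beta> =
     (smult (complex_of_real \<beta>) ([:-1, 0, 1:]) - smult (of_nat (Suc n)) [:0, 0, 1:])
       * Fpoly (Suc n) \<beta>
     + smult (1/2) [:0, -1, 0, 1:] * pderiv (Fpoly (Suc n) \<beta>)"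

definition calF :: "nat \<Rightarrow> real \<Rightarrow> real \<Rightarrow> complex" where
  "calF m x \<beta> =
     exp (of_nat m * pi * \<i> * x) * exp (- 2 * pi * \<i> * \<beta> * x)
     * (complex_of_real (sin (pi * x)) ^ m / complex_of_real (pi ^ (m - 1)))
     * vderiv_iter (m - 1)
         (\<lambda>t. (\<i> - complex_of_real (cot (pi * t))) * exp (2 * pi * \<i> * \<beta> * t)) x"

end

theory Submission
  imports Defs
begin

definition uu :: "complex \<Rightarrow> complex" where "uu z = exp (\<i> * of_real pi * z)"

definition Phi :: "real \<Rightarrow> nat \<Rightarrow> complex \<Rightarrow> complex" where
 "Phi \<beta> k z = (2*\<i>)^(k+1) * of_real pi ^ k * exp (2 * of_real pi * \<i> * of_real \<beta> * z)
     * poly (Fpoly (Suc k) \<beta>) (uu z) / ((uu z)^2 - 1)^(k+1)"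

lemma Fpoly_step: "poly (Fpoly (Suc (Suc k)) \<beta>) u =
   (of_real \<beta> * (u^2 - 1) - of_nat (Suc k) * u^2) * poly (Fpoly (Suc k) \<beta>) u
   + u * (u^2 - 1) / 2 * poly (pderiv (Fpoly (Suc k) \<beta>)) u"
  by (simp add: algebra_simps power2_eq_square) (simp add: field_simps)

lemma alg:
  fixes w E P Q b p z :: complex and k :: nat
  assumes A: "w^2 - 1 \<noteq> 0"
  shows "(((0 * E + E * (0 * z + 1 * (2 * p * \<i> * b)) * ((2 * \<i>) ^ (k + 1) * p ^ k)) * P +
       \<i> * p * w * Q * ((2 * \<i>) ^ (k + 1) * p ^ k * E)) * (w\<^sup>2 - 1) ^ (k + 1) -
      (2 * \<i>) ^ (k + 1) * p ^ k * E * P *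
      (of_nat (k + 1) * ((of_nat 2 * (\<i> * p * w * w ^ (2 - Suc 0)) - 0) * (w\<^sup>2 - 1) ^ (k + 1 - Suc 0)))) /
     ((w\<^sup>2 - 1) ^ (k + 1) * (w\<^sup>2 - 1) ^ (k + 1)) =
     (2 * \<i>) ^ (Suc k + 1) * p ^ Suc k * E *
     ((b * (w^2 - 1) - of_nat (Suc k) * w^2) * P + w * (w^2 - 1) / 2 * Q) /
     (w\<^sup>2 - 1) ^ (Suc k + 1)"
proof -
  define A where "A = w^2 - 1"
  define C where "C = (2 * \<i>) ^ (k + 1) * p ^ k"
  have An: "A \<noteq> 0" using A A_def by simp
  have e1: "(((0 * E + E * (0 * z + 1 * (2 * p * \<i> * b)) * ((2 * \<i>) ^ (k + 1) * p ^ k)) * P +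
       \<i> * p * w * Q * ((2 * \<i>) ^ (k + 1) * p ^ k * E)) * A ^ (k + 1) -
      (2 * \<i>) ^ (k + 1) * p ^ k * E * P *
      (of_nat (k + 1) * ((of_nat 2 * (\<i> * p * w * w ^ (2 - Suc 0)) - 0) * A ^ (k + 1 - Suc 0))))
     = A^k * (C * E * \<i> * p * ((2*b*P + w*Q) * A - 2 * of_nat (k+1) * w^2 * P))"
    unfolding C_def by (simp add: algebra_simps power2_eq_square)
  have e2: "A ^ (k + 1) * A ^ (k + 1) = A^k * A^(Suc k + 1)" by (simp add: algebra_simps)
  have e3: "(2 * \<i>) ^ (Suc k + 1) * p ^ Suc k * E *
     ((b * A - of_nat (Suc k) * w^2) * P + w * A / 2 * Q) = C * E * \<i> * p * ((2*b*P + w*Q) * A - 2 * of_nat (k+1) * w^2 * P)"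
    unfolding C_def by (simp add: algebra_simps)
  show ?thesis
    using An unfolding A_def[symmetric] e1 e2 e3 by simp
qed

lemma Phi_deriv:
  assumes "(uu z)^2 \<noteq> 1"
  shows "(Phi \<beta> k has_field_derivative Phi \<beta> (Suc k) z) (at z)"
proof -
  have d: "(uu has_field_derivative \<i> * of_real pi * uu z) (at z)"
    unfolding uu_def by (auto intro!: derivative_eq_intros)
  have ne: "(uu z)^2 - 1 \<noteq> 0" using assms by simp
  show ?thesis
    unfolding Phi_def
    apply (rule derivative_eq_intros refl d poly_DERIV[THEN DERIV_chain2])+
     apply (use ne in simp)
    apply (simp only: Fpoly_step)
    apply (rule alg)
  using assms by simp
qed

lemma vderiv_iter_Suc: "vderiv_iter (Suc k) f t = vector_derivative (vderiv_iter k f) (at t)"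
  by (simp add: vderiv_iter_def)

lemma vderiv_iter_0: "vderiv_iter 0 f = f"
  by (simp add: vderiv_iter_def)

lemma trig_facts:
  fixes t :: real
  assumes "0 < t" "t < 1"
  shows "uu (of_real t) \<noteq> 0"
    and "complex_of_real (sin (pi * t)) = ((uu (of_real t))^2 - 1) / (2 * \<i> * uu (of_real t))"
    and "(uu (of_real t))^2 - 1 \<noteq> 0"
    and "complex_of_real (cot (pi * t)) = \<i> * ((uu (of_real t))^2 + 1) / ((uu (of_real t))^2 - 1)"
proof -
  define w where "w = uu (of_real t)"
  have w0: "w \<noteq> 0" unfolding w_def uu_def by simp
  have ei: "exp (\<i> * complex_of_real (pi * t)) = w" unfolding w_def uu_def by (simp add: mult_ac)
  have em: "exp (-(\<i> * complex_of_real (pi * t))) = inverse w"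
    using ei by (simp add: exp_minus)
  have s: "complex_of_real (sin (pi * t)) = (w^2 - 1) / (2 * \<i> * w)"
    unfolding sin_of_real[symmetric] sin_exp_eq ei em using w0
    by (simp add: field_simps power2_eq_square)
  have c: "complex_of_real (cos (pi * t)) = (w^2 + 1) / (2 * w)"
    unfolding cos_of_real[symmetric] cos_exp_eq ei em using w0
    by (simp add: field_simps power2_eq_square)
  have sp: "sin (pi * t) > 0" using assms by (intro sin_gt_zero) auto
  have A: "w^2 - 1 \<noteq> 0"
  proof
    assume "w^2 - 1 = 0"
    then have "complex_of_real (sin (pi * t)) = 0" using s by simp
    then show False using sp by simp
  qed
  have ct: "complex_of_real (cot (pi * t)) = \<i> * (w^2 + 1) / (w^2 - 1)"
    unfolding cot_def of_real_divide c s using w0 A by (simp add: field_simps)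
  show "uu (of_real t) \<noteq> 0" using w0 w_def by simp
  show "complex_of_real (sin (pi * t)) = ((uu (of_real t))^2 - 1) / (2 * \<i> * uu (of_real t))"
    using s w_def by simp
  show "(uu (of_real t))^2 - 1 \<noteq> 0" using A w_def by simp
  show "complex_of_real (cot (pi * t)) = \<i> * ((uu (of_real t))^2 + 1) / ((uu (of_real t))^2 - 1)"
    using ct w_def by simp
qed

lemma iter_formula:
  "\<forall>t. 0 < t \<and> t < 1 \<longrightarrow>
     vderiv_iter k (\<lambda>t. (\<i> - complex_of_real (cot (pi * t))) * exp (2 * pi * \<i> * \<beta> * t)) t
       = Phi \<beta> k (of_real t)"
proof (induction k)
  case 0
  show ?case
  proof (intro allI impI)
    fix t :: real assume t: "0 < t \<and> t < 1"
    note tf = trig_facts[of t]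
    show "vderiv_iter 0 (\<lambda>t. (\<i> - complex_of_real (cot (pi * t))) * exp (2 * pi * \<i> * \<beta> * t)) t
       = Phi \<beta> 0 (of_real t)"
      unfolding vderiv_iter_0 Phi_def using t tf(3)
      by (simp add: tf(4) field_simps)
  qed
next
  case (Suc k)
  show ?case
  proof (intro allI impI)
    fix t :: real assume t: "0 < t \<and> t < 1"
    note tf = trig_facts[of t]
    have "((\<lambda>s. Phi \<beta> k (of_real s)) has_vector_derivative Phi \<beta> (Suc k) (of_real t)) (at t)"
      by (rule has_vector_derivative_real_field, rule Phi_deriv) (use t tf(3) in simp)
    then have "(vderiv_iter k (\<lambda>t. (\<i> - complex_of_real (cot (pi * t))) * exp (2 * pi * \<i> * \<beta> * t))
        has_vector_derivative Phi \<beta> (Suc k) (of_real t)) (at t)"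
      by (rule has_vector_derivative_transform_within_open[where S="{0<..<1}"]) (use t Suc in auto)
    then show "vderiv_iter (Suc k) (\<lambda>t. (\<i> - complex_of_real (cot (pi * t))) * exp (2 * pi * \<i> * \<beta> * t)) t
       = Phi \<beta> (Suc k) (of_real t)"
      unfolding vderiv_iter_Suc by (rule vector_derivative_at)
  qed
qed

theorem theorem4p4:
  fixes m :: nat and \<beta> x :: real
  assumes "m \<ge> 1" and "0 < x" and "x < 1"
  shows "calF m x \<beta> = poly (Fpoly m \<beta>) (exp (\<i> * pi * x))"
proof -
  obtain n where m: "m = Suc n" using assms(1) by (cases m) auto
  note tf = trig_facts[OF assms(2,3)]
  define w where "w = uu (of_real x)"
  have w: "exp (\<i> * pi * x) = w" unfolding w_def uu_def by simp
  have em: "exp (of_nat m * pi * \<i> * x) = w ^ m"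
    unfolding w_def uu_def by (simp add: exp_of_nat_mult[symmetric] mult_ac)
  have ee: "exp (- 2 * pi * \<i> * \<beta> * x) * exp (2 * complex_of_real pi * \<i> * complex_of_real \<beta> * complex_of_real x) = 1"
    by (simp add: exp_add[symmetric])
  have it: "vderiv_iter n (\<lambda>t. (\<i> - complex_of_real (cot (pi * t))) * exp (2 * pi * \<i> * \<beta> * t)) x
       = Phi \<beta> n (of_real x)" using iter_formula assms by blast
  have w0: "w \<noteq> 0" and A: "w^2 - 1 \<noteq> 0" using tf w_def by auto
  have s: "complex_of_real (sin (pi * x)) = (w^2 - 1) / (2 * \<i> * w)" using tf w_def by simp
  have pn: "complex_of_real pi ^ n \<noteq> 0" by simp
  show ?thesis
    unfolding calF_def m diff_Suc_1 it w Phi_def w_def[symmetric] 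
    unfolding m[symmetric] em s
    using w0 A pn ee m
    by (simp add: field_simps power_mult_distrib power_divide)
qed

end
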